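(* For all $u,v,w\in\mathcal{A}(D)$ we have $\langle u, v*w\rangle=\langle u*v,w\rangle$.
   Context: Let $G$ be a group generated by a conjugacy class $D$ of involutions such that for all $d,e\in D$ the order of $de$ is $1$, $2$ or $3$ ($3$-transpositions). Lines of the Fischer space on $D$ are triples $\{d,e,d^e\}$ with $d,e\in D$ non-commuting. $\mathcal{A}(D)$ is the $\mathbb{F}_2$-vector space with basis $D$ (finite subsets of $D$ under symmetric difference), with bilinear product determined by $d*e=d+e+f$ if $\{d,e,f\}$ is a line and $d*e=0$ otherwise. The bilinear form $\langle\cdot,\cdot\rangle$ on $\mathcal{A}(D)$ is determined by $\langle d,e\rangle=1$ if $d,e$ do not commute and $\langle d,e\rangle=0$ otherwise. *)

theory Defs
  imports "HOL-Algebra.Algebra"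
begin

definition conj_class :: "('a, 'b) monoid_scheme \<Rightarrow> 'a \<Rightarrow> 'a set" where
  "conj_class G x = {inv\<^bsub>G\<^esub> g \<otimes>\<^bsub>G\<^esub> x \<otimes>\<^bsub>G\<^esub> g | g. g \<in> carrier G}"

definition three_transposition_group :: "('a, 'b) monoid_scheme \<Rightarrow> 'a set \<Rightarrow> bool" where
  "three_transposition_group G D \<longleftrightarrow>
     group G \<and>
     (\<exists>a \<in> carrier G. D = conj_class G a) \<and>
     (\<forall>d \<in> D. d \<noteq> \<one>\<^bsub>G\<^esub> \<and> d \<otimes>\<^bsub>G\<^esub> d = \<one>\<^bsub>G\<^esub>) \<and>
     generate G D = carrier G \<and>
     (\<forall>d \<in> D. \<forall>e \<in> D. group.ord G (d \<otimes>\<^bsub>G\<^esub> e) \<in> {1, 2, 3})"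

(* Elements of A(D): finite subsets of D (F_2-linear combinations of basis D) *)
definition algA :: "'a set \<Rightarrow> 'a set set" where
  "algA D = {u. u \<subseteq> D \<and> finite u}"

(* product of basis elements: d*e = d+e+d^e if {d,e,d^e} is a line, 0 otherwise *)
definition basic_prod :: "('a, 'b) monoid_scheme \<Rightarrow> 'a \<Rightarrow> 'a \<Rightarrow> 'a set" where
  "basic_prod G d e =
     (if d \<otimes>\<^bsub>G\<^esub> e = e \<otimes>\<^bsub>G\<^esub> d then {}
      else {d, e, inv\<^bsub>G\<^esub> e \<otimes>\<^bsub>G\<^esub> d \<otimes>\<^bsub>G\<^esub> e})"

(* bilinear extension over F_2: x occurs in u*v iff it occurs in an odd number of d*e, d\<in>u, e\<in>v *)
definition alg_mult :: "('a, 'b) monoid_scheme \<Rightarrow> 'a set \<Rightarrow> 'a set \<Rightarrow> 'a set" where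
  "alg_mult G u v = {x. odd (card {(d, e). d \<in> u \<and> e \<in> v \<and> x \<in> basic_prod G d e})}"

(* bilinear form with values in F_2 = bool (True = 1): parity of the number of non-commuting pairs *)
definition alg_form :: "('a, 'b) monoid_scheme \<Rightarrow> 'a set \<Rightarrow> 'a set \<Rightarrow> bool" where
  "alg_form G u v = odd (card {(d, e). d \<in> u \<and> e \<in> v \<and> d \<otimes>\<^bsub>G\<^esub> e \<noteq> e \<otimes>\<^bsub>G\<^esub> d})"

end

theory Submission
  imports Defs
begin

lemma (in group) invol_inv: "e \<in> carrier G \<Longrightarrow> e \<otimes> e = \<one> \<Longrightarrow> inv e = e"
  by (metis inv_equality)

lemma (in group) ord3:
  assumes e: "e \<in> carrier G" and f: "f \<in> carrier G"
    and ee: "e \<otimes> e = \<one>" and ff: "f \<otimes> f = \<one>"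
    and o: "ord (e \<otimes> f) \<in> {1,2,3}" and nc: "e \<otimes> f \<noteq> f \<otimes> e"
  shows "e \<otimes> f \<otimes> e = f \<otimes> e \<otimes> f"
proof -
  have p: "(e \<otimes> f) [^] ord (e \<otimes> f) = \<one>" using e f by simp
  have ie: "inv e = e" and if': "inv f = f" using invol_inv e f ee ff by auto
  have "ord (e \<otimes> f) \<noteq> 1"
  proof
    assume "ord (e \<otimes> f) = 1"
    with p have "e \<otimes> f = \<one>" using e f by simp
    hence "inv f = e" using e f by (metis inv_equality)
    with if' nc show False by simp
  qed
  moreover have "ord (e \<otimes> f) \<noteq> 2"
  proof
    assume "ord (e \<otimes> f) = 2"
    with p have "e \<otimes> f \<otimes> (e \<otimes> f) = \<one>" using e f by (simp add: numeral_2_eq_2)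
    hence "e \<otimes> f = inv (e \<otimes> f)" using e f by (metis inv_equality m_closed)
    also have "\<dots> = f \<otimes> e" using e f ie if' by (simp add: inv_mult_group)
    finally show False using nc by simp
  qed
  ultimately have "ord (e \<otimes> f) = 3" using o by auto
  with p have "e \<otimes> f \<otimes> (e \<otimes> f) \<otimes> (e \<otimes> f) = \<one>" using e f by (simp add: numeral_3_eq_3)
  hence "(e \<otimes> f \<otimes> e) \<otimes> (f \<otimes> e \<otimes> f) = \<one>" using e f by (simp add: m_assoc)
  hence "e \<otimes> f \<otimes> e = inv (f \<otimes> e \<otimes> f)" using e f by (metis inv_equality m_closed)
  also have "\<dots> = f \<otimes> e \<otimes> f" using e f ie if' by (simp add: inv_mult_group m_assoc)
  finally show ?thesis .
qed

lemma (in group) conj_comm: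
  assumes e: "e \<in> carrier G" and ee: "e \<otimes> e = \<one>" and a: "a \<in> carrier G" and b: "b \<in> carrier G"
  shows "(e \<otimes> a \<otimes> e) \<otimes> (e \<otimes> b \<otimes> e) = (e \<otimes> b \<otimes> e) \<otimes> (e \<otimes> a \<otimes> e) \<longleftrightarrow> a \<otimes> b = b \<otimes> a"
proof -
  have 1: "(e \<otimes> a \<otimes> e) \<otimes> (e \<otimes> b \<otimes> e) = e \<otimes> (a \<otimes> b) \<otimes> e"
    using e a b ee by (simp add: m_assoc) (metis a b e ee l_one m_assoc m_closed)
  have 2: "(e \<otimes> b \<otimes> e) \<otimes> (e \<otimes> a \<otimes> e) = e \<otimes> (b \<otimes> a) \<otimes> e"
    using e a b ee by (simp add: m_assoc) (metis a b e ee l_one m_assoc m_closed)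
  show ?thesis unfolding 1 2 using e a b by simp
qed

lemma card3_filter:
  assumes "a \<noteq> b" "a \<noteq> c" "b \<noteq> c"
  shows "card {x \<in> {a,b,c}. P x} = of_bool (P a) + of_bool (P b) + of_bool (P c)"
proof -
  have "{x \<in> {a,b,c}. P x} = (if P a then {a} else {}) \<union> (if P b then {b} else {}) \<union> (if P c then {c} else {})"
    by auto
  thus ?thesis using assms by (cases "P a"; cases "P b"; cases "P c"; simp)
qed

lemma (in group) line_distinct:
  assumes e: "e \<in> carrier G" and f: "f \<in> carrier G" and ee: "e \<otimes> e = \<one>" and ff: "f \<otimes> f = \<one>"
    and nc: "e \<otimes> f \<noteq> f \<otimes> e"
  shows "e \<noteq> f" "e \<noteq> f \<otimes> e \<otimes> f" "f \<noteq> f \<otimes> e \<otimes> f"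
proof -
  show "e \<noteq> f" using nc by auto
  show "e \<noteq> f \<otimes> e \<otimes> f"
  proof
    assume "e = f \<otimes> e \<otimes> f"
    hence "f \<otimes> e = f \<otimes> (f \<otimes> e \<otimes> f)" by simp
    also have "\<dots> = e \<otimes> f" using e f ff by (metis l_one m_assoc m_closed)
    finally show False using nc by simp
  qed
  show "f \<noteq> f \<otimes> e \<otimes> f"
  proof
    assume "f = f \<otimes> e \<otimes> f"
    hence "f \<otimes> f = f \<otimes> e \<otimes> f \<otimes> f" by simp
    hence "\<one> = f \<otimes> e" using e f ff by (simp add: m_assoc)
    hence "f \<otimes> \<one> = f \<otimes> (f \<otimes> e)" by simp
    hence "f = e" using e f ff by (simp add: m_assoc[symmetric])
    thus False using nc by simp
  qed
qed

lemma (in group) local_id: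
  assumes d: "d \<in> carrier G" and e: "e \<in> carrier G" and f: "f \<in> carrier G"
    and dd: "d \<otimes> d = \<one>" and ee: "e \<otimes> e = \<one>" and ff: "f \<otimes> f = \<one>"
    and ef3: "e \<otimes> f \<noteq> f \<otimes> e \<Longrightarrow> e \<otimes> f \<otimes> e = f \<otimes> e \<otimes> f"
    and de3: "d \<otimes> e \<noteq> e \<otimes> d \<Longrightarrow> d \<otimes> e \<otimes> d = e \<otimes> d \<otimes> e"
  shows "card {x \<in> basic_prod G e f. d \<otimes> x \<noteq> x \<otimes> d} mod 2
       = card {y \<in> basic_prod G d e. y \<otimes> f \<noteq> f \<otimes> y} mod 2"
proof -
  have ie: "inv e = e" and iff: "inv f = f" using invol_inv e f ee ff by auto
  define A where "A = (d \<otimes> e \<noteq> e \<otimes> d)"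
  define B where "B = (e \<otimes> f \<noteq> f \<otimes> e)"
  define P where "P = (d \<otimes> f \<noteq> f \<otimes> d)"
  define Q where "Q = ((e \<otimes> d \<otimes> e) \<otimes> f \<noteq> f \<otimes> (e \<otimes> d \<otimes> e))"
  have eefe: "e \<otimes> (e \<otimes> f \<otimes> e) \<otimes> e = f" using e f ee by (metis l_one m_assoc m_closed r_one)
  have eede: "e \<otimes> (e \<otimes> d \<otimes> e) \<otimes> e = d" using e d ee by (metis l_one m_assoc m_closed r_one)
  have L: "card {x \<in> basic_prod G e f. d \<otimes> x \<noteq> x \<otimes> d} = (if B then of_bool A + of_bool P + of_bool Q else 0)"
  proof (cases B)
    case True
    hence nc: "e \<otimes> f \<noteq> f \<otimes> e" by (simp add: B_def)
    have bp: "basic_prod G e f = {e, f, f \<otimes> e \<otimes> f}" using nc iff by (simp add: basic_prod_def)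
    have "(d \<otimes> (f \<otimes> e \<otimes> f) \<noteq> (f \<otimes> e \<otimes> f) \<otimes> d) = Q"
      using conj_comm[OF e ee d m_closed[OF m_closed[OF e f] e]] ef3[OF nc] eefe
      unfolding Q_def by auto
    moreover have "(d \<otimes> e \<noteq> e \<otimes> d) = A" by (simp add: A_def)
    moreover have "(d \<otimes> f \<noteq> f \<otimes> d) = P" by (simp add: P_def)
    ultimately show ?thesis using True bp card3_filter[OF line_distinct[OF e f ee ff nc]] by simp
  next
    case False thus ?thesis by (simp add: B_def basic_prod_def)
  qed
  have R: "card {y \<in> basic_prod G d e. y \<otimes> f \<noteq> f \<otimes> y} = (if A then of_bool P + of_bool B + of_bool Q else 0)"
  proof (cases A)
    case True
    hence nc: "d \<otimes> e \<noteq> e \<otimes> d" by (simp add: A_def)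
    have bp: "basic_prod G d e = {d, e, e \<otimes> d \<otimes> e}" using nc ie by (simp add: basic_prod_def)
    have "(e \<otimes> f \<noteq> f \<otimes> e) = B" by (simp add: B_def)
    moreover have "(d \<otimes> f \<noteq> f \<otimes> d) = P" by (simp add: P_def)
    ultimately show ?thesis using True bp card3_filter[OF line_distinct[OF d e dd ee nc]] Q_def by simp
  next
    case False thus ?thesis by (simp add: A_def basic_prod_def)
  qed
  have QP1: "\<not> A \<Longrightarrow> Q = P"
  proof -
    assume "\<not> A"
    hence "e \<otimes> d \<otimes> e = d" using d e ee unfolding A_def by (metis l_one m_assoc)
    thus "Q = P" by (simp add: Q_def P_def)
  qed
  have QP2: "\<not> B \<Longrightarrow> Q = P"
  proof -
    assume "\<not> B"
    hence "e \<otimes> f \<otimes> e = f" using f e ee unfolding B_def by (metis r_one m_assoc)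
    thus "Q = P"
      using conj_comm[OF e ee m_closed[OF m_closed[OF e d] e] f] eede unfolding Q_def P_def by auto
  qed
  show ?thesis unfolding L R using QP1 QP2
    by (cases A; cases B; cases P; cases Q; simp)
qed

lemma sum_mod2_cong:
  assumes "\<And>x. x \<in> A \<Longrightarrow> (f x :: nat) mod 2 = g x mod 2"
  shows "sum f A mod 2 = sum g A mod 2"
proof -
  have "sum f A mod 2 = (\<Sum>x\<in>A. f x mod 2) mod 2" by (simp add: mod_sum_eq)
  also have "(\<Sum>x\<in>A. f x mod 2) = (\<Sum>x\<in>A. g x mod 2)" using assms by (rule sum.cong[OF refl])
  also have "(\<Sum>x\<in>A. g x mod 2) mod 2 = sum g A mod 2" by (simp add: mod_sum_eq)
  finally show ?thesis .
qed

lemma card_filter_sum: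
  "finite A \<Longrightarrow> card {x \<in> A. Q x} = (\<Sum>x\<in>A. if Q x then 1 else 0)"
  by (simp add: sum.inter_filter[symmetric])

lemma parity_reduce:
  fixes bp :: "'t \<Rightarrow> 'x set"
  assumes T: "finite T" and fin: "\<And>t. t \<in> T \<Longrightarrow> finite (bp t)"
  shows "card {x. odd (card {t\<in>T. x \<in> bp t}) \<and> P x} mod 2 = (\<Sum>t\<in>T. card {x\<in>bp t. P x}) mod 2"
proof -
  define B where "B = \<Union>(bp ` T)"
  have B: "finite B" using T fin by (simp add: B_def)
  define N where "N x = card {t\<in>T. x \<in> bp t}" for x
  have "(\<Sum>t\<in>T. card {x\<in>bp t. P x}) = (\<Sum>t\<in>T. \<Sum>x\<in>B. if x \<in> bp t \<and> P x then 1 else 0)"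
  proof (rule sum.cong)
    fix t assume t: "t \<in> T"
    have "{x\<in>bp t. P x} = {x\<in>B. x \<in> bp t \<and> P x}" using t by (auto simp: B_def)
    thus "card {x\<in>bp t. P x} = (\<Sum>x\<in>B. if x \<in> bp t \<and> P x then 1 else 0)"
      using card_filter_sum[OF B] by simp
  qed simp
  also have "\<dots> = (\<Sum>x\<in>B. \<Sum>t\<in>T. if x \<in> bp t \<and> P x then 1 else 0)" by (rule sum.swap)
  also have "\<dots> = (\<Sum>x\<in>B. if P x then N x else 0)"
  proof (rule sum.cong)
    fix x assume "x \<in> B"
    show "(\<Sum>t\<in>T. if x \<in> bp t \<and> P x then 1 else 0) = (if P x then N x else 0)"
      using card_filter_sum[OF T, of "\<lambda>t. x \<in> bp t"] by (simp add: N_def)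
  qed simp
  finally have 1: "(\<Sum>t\<in>T. card {x\<in>bp t. P x}) mod 2 = (\<Sum>x\<in>B. if P x then N x else 0) mod 2" by simp
  have 2: "(\<Sum>x\<in>B. if P x then N x else 0) mod 2 = (\<Sum>x\<in>B. if odd (N x) \<and> P x then 1 else 0) mod 2"
  proof (rule sum_mod2_cong)
    fix x
    show "(if P x then N x else 0) mod 2 = (if odd (N x) \<and> P x then 1 else 0) mod 2"
      by (cases "P x"; cases "even (N x)") (simp_all add: odd_iff_mod_2_eq_one)
  qed
  have 3: "{x. odd (N x) \<and> P x} = {x\<in>B. odd (N x) \<and> P x}"
  proof safe
    fix x assume "odd (N x)"
    hence "N x \<noteq> 0" by (metis even_zero)
    hence "{t\<in>T. x \<in> bp t} \<noteq> {}" unfolding N_def by (metis card.empty)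
    thus "x \<in> B" by (auto simp: B_def)
  qed
  show ?thesis using 1 2 3 card_filter_sum[OF B, of "\<lambda>x. odd (N x) \<and> P x"]
    by (simp add: N_def)
qed

lemma card_pairs1:
  assumes "finite A" "\<And>a. a \<in> A \<Longrightarrow> finite {b. R a b}"
  shows "card {(a,b). a \<in> A \<and> R a b} = (\<Sum>a\<in>A. card {b. R a b})"
proof -
  have "{(a,b). a \<in> A \<and> R a b} = Sigma A (\<lambda>a. {b. R a b})" by auto
  thus ?thesis using assms by (simp add: card_SigmaI)
qed

lemma card_pairs2:
  assumes "finite B" "\<And>b. b \<in> B \<Longrightarrow> finite {a. R a b}"
  shows "card {(a,b). R a b \<and> b \<in> B} = (\<Sum>b\<in>B. card {a. R a b})"
proof -
  have "{(a,b). R a b \<and> b \<in> B} = (\<lambda>(b,a). (a,b)) ` {(b,a). b \<in> B \<and> R a b}" by auto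
  moreover have "inj_on (\<lambda>(b,a). (a,b)) {(b,a). b \<in> B \<and> R a b}" by (auto simp: inj_on_def)
  ultimately have "card {(a,b). R a b \<and> b \<in> B} = card {(b,a). b \<in> B \<and> R a b}"
    by (simp add: card_image)
  also have "\<dots> = (\<Sum>b\<in>B. card {a. R a b})" using card_pairs1[of B "\<lambda>b a. R a b"] assms by simp
  finally show ?thesis .
qed

lemma fin_odd:
  assumes T: "finite T" and fin: "\<And>t. t \<in> T \<Longrightarrow> finite (bp t)"
  shows "finite {x. odd (card {t\<in>T. x \<in> bp t}) \<and> Q x}"
proof (rule finite_subset)
  show "finite (\<Union>(bp ` T))" using T fin by simp
  show "{x. odd (card {t\<in>T. x \<in> bp t}) \<and> Q x} \<subseteq> \<Union>(bp ` T)"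
  proof
    fix x assume "x \<in> {x. odd (card {t\<in>T. x \<in> bp t}) \<and> Q x}"
    hence "card {t\<in>T. x \<in> bp t} \<noteq> 0" by (metis (no_types, lifting) even_zero mem_Collect_eq)
    hence "{t\<in>T. x \<in> bp t} \<noteq> {}" by (metis card.empty)
    thus "x \<in> \<Union>(bp ` T)" by auto
  qed
qed

lemma reduce_left:
  assumes T: "finite T" and fin: "\<And>t. t \<in> T \<Longrightarrow> finite (bp t)" and A: "finite A"
  shows "card {(a,x). a \<in> A \<and> x \<in> {x. odd (card {t\<in>T. x \<in> bp t})} \<and> R a x} mod 2
       = (\<Sum>a\<in>A. \<Sum>t\<in>T. card {x\<in>bp t. R a x}) mod 2"
proof -
  have "card {(a,x). a \<in> A \<and> x \<in> {x. odd (card {t\<in>T. x \<in> bp t})} \<and> R a x}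
      = (\<Sum>a\<in>A. card {x. odd (card {t\<in>T. x \<in> bp t}) \<and> R a x})"
    using card_pairs1[OF A, of "\<lambda>a x. odd (card {t\<in>T. x \<in> bp t}) \<and> R a x"] fin_odd[OF T fin]
    by simp
  moreover have "(\<Sum>a\<in>A. card {x. odd (card {t\<in>T. x \<in> bp t}) \<and> R a x}) mod 2
      = (\<Sum>a\<in>A. \<Sum>t\<in>T. card {x\<in>bp t. R a x}) mod 2"
    by (rule sum_mod2_cong) (rule parity_reduce[OF T fin])
  ultimately show ?thesis by simp
qed

lemma reduce_right:
  assumes T: "finite T" and fin: "\<And>t. t \<in> T \<Longrightarrow> finite (bp t)" and B: "finite B"
  shows "card {(x,b). x \<in> {x. odd (card {t\<in>T. x \<in> bp t})} \<and> b \<in> B \<and> R x b} mod 2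
       = (\<Sum>b\<in>B. \<Sum>t\<in>T. card {x\<in>bp t. R x b}) mod 2"
proof -
  have e: "{(x,b). x \<in> {x. odd (card {t\<in>T. x \<in> bp t})} \<and> b \<in> B \<and> R x b}
        = {(x,b). (odd (card {t\<in>T. x \<in> bp t}) \<and> R x b) \<and> b \<in> B}" by auto
  have "card {(x,b). (odd (card {t\<in>T. x \<in> bp t}) \<and> R x b) \<and> b \<in> B}
      = (\<Sum>b\<in>B. card {x. odd (card {t\<in>T. x \<in> bp t}) \<and> R x b})"
    using card_pairs2[OF B, of "\<lambda>x b. odd (card {t\<in>T. x \<in> bp t}) \<and> R x b"] fin_odd[OF T fin]
    by simp
  moreover have "(\<Sum>b\<in>B. card {x. odd (card {t\<in>T. x \<in> bp t}) \<and> R x b}) mod 2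
      = (\<Sum>b\<in>B. \<Sum>t\<in>T. card {x\<in>bp t. R x b}) mod 2"
    by (rule sum_mod2_cong) (rule parity_reduce[OF T fin])
  ultimately show ?thesis unfolding e by simp
qed

theorem proposition2p1:
  fixes G :: "('a, 'b) monoid_scheme" and D :: "'a set"
  assumes "three_transposition_group G D"
    and "u \<in> algA D" and "v \<in> algA D" and "w \<in> algA D"
  shows "alg_form G u (alg_mult G v w) = alg_form G (alg_mult G u v) w"
proof -
  from assms(1) have grp: "group G" and Dcc: "\<exists>a\<in>carrier G. D = conj_class G a"
    and invD: "\<forall>d\<in>D. d \<noteq> \<one>\<^bsub>G\<^esub> \<and> d \<otimes>\<^bsub>G\<^esub> d = \<one>\<^bsub>G\<^esub>"
    and ordD: "\<forall>d\<in>D. \<forall>e\<in>D. group.ord G (d \<otimes>\<^bsub>G\<^esub> e) \<in> {1, 2, 3}"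
    unfolding three_transposition_group_def by auto
  interpret group G by (rule grp)
  have Dc: "D \<subseteq> carrier G" using Dcc by (auto simp: conj_class_def)
  have u: "finite u" "u \<subseteq> D" and v: "finite v" "v \<subseteq> D" and w: "finite w" "w \<subseteq> D"
    using assms(2-4) by (auto simp: algA_def)
  define bp where "bp = (\<lambda>(e,f). basic_prod G e f)"
  have bpfin: "finite (bp t)" for t by (cases t) (simp add: bp_def basic_prod_def)
  have mult: "alg_mult G x y = {z. odd (card {t\<in>x \<times> y. z \<in> bp t})}" for x y
  proof -
    have "{(d, e). d \<in> x \<and> e \<in> y \<and> z \<in> basic_prod G d e} = {t\<in>x \<times> y. z \<in> bp t}" for z
      by (auto simp: bp_def)
    thus ?thesis unfolding alg_mult_def by simp
  qed
  define F1 where "F1 d e f = card {x \<in> basic_prod G e f. d \<otimes>\<^bsub>G\<^esub> x \<noteq> x \<otimes>\<^bsub>G\<^esub> d}" for d e f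
  define F2 where "F2 d e f = card {y \<in> basic_prod G d e. y \<otimes>\<^bsub>G\<^esub> f \<noteq> f \<otimes>\<^bsub>G\<^esub> y}" for d e f
  have loc: "F1 d e f mod 2 = F2 d e f mod 2" if "d \<in> D" "e \<in> D" "f \<in> D" for d e f
    unfolding F1_def F2_def
  proof (rule local_id)
    show "d \<in> carrier G" "e \<in> carrier G" "f \<in> carrier G" using that Dc by auto
    show "d \<otimes>\<^bsub>G\<^esub> d = \<one>\<^bsub>G\<^esub>" "e \<otimes>\<^bsub>G\<^esub> e = \<one>\<^bsub>G\<^esub>" "f \<otimes>\<^bsub>G\<^esub> f = \<one>\<^bsub>G\<^esub>" using that invD by auto
    show "e \<otimes>\<^bsub>G\<^esub> f \<otimes>\<^bsub>G\<^esub> e = f \<otimes>\<^bsub>G\<^esub> e \<otimes>\<^bsub>G\<^esub> f" if "e \<otimes>\<^bsub>G\<^esub> f \<noteq> f \<otimes>\<^bsub>G\<^esub> e"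
      using ord3[of e f] \<open>e \<in> D\<close> \<open>f \<in> D\<close> Dc invD ordD that by auto
    show "d \<otimes>\<^bsub>G\<^esub> e \<otimes>\<^bsub>G\<^esub> d = e \<otimes>\<^bsub>G\<^esub> d \<otimes>\<^bsub>G\<^esub> e" if "d \<otimes>\<^bsub>G\<^esub> e \<noteq> e \<otimes>\<^bsub>G\<^esub> d"
      using ord3[of d e] \<open>d \<in> D\<close> \<open>e \<in> D\<close> Dc invD ordD that by auto
  qed
  have LHS: "card {(d, x). d \<in> u \<and> x \<in> alg_mult G v w \<and> d \<otimes>\<^bsub>G\<^esub> x \<noteq> x \<otimes>\<^bsub>G\<^esub> d} mod 2
      = (\<Sum>d\<in>u. \<Sum>e\<in>v. \<Sum>f\<in>w. F1 d e f) mod 2"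
  proof -
    have "card {(d, x). d \<in> u \<and> x \<in> alg_mult G v w \<and> d \<otimes>\<^bsub>G\<^esub> x \<noteq> x \<otimes>\<^bsub>G\<^esub> d} mod 2
        = (\<Sum>d\<in>u. \<Sum>t\<in>v\<times>w. card {x\<in>bp t. d \<otimes>\<^bsub>G\<^esub> x \<noteq> x \<otimes>\<^bsub>G\<^esub> d}) mod 2"
      unfolding mult by (rule reduce_left[OF finite_cartesian_product[OF v(1) w(1)] bpfin u(1)])
    also have "(\<Sum>d\<in>u. \<Sum>t\<in>v\<times>w. card {x\<in>bp t. d \<otimes>\<^bsub>G\<^esub> x \<noteq> x \<otimes>\<^bsub>G\<^esub> d}) = (\<Sum>d\<in>u. \<Sum>e\<in>v. \<Sum>f\<in>w. F1 d e f)"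
      by (rule sum.cong[OF refl]) (unfold sum.cartesian_product F1_def, rule sum.cong, auto simp: bp_def)
    finally show ?thesis .
  qed
  have RHS: "card {(y, f). y \<in> alg_mult G u v \<and> f \<in> w \<and> y \<otimes>\<^bsub>G\<^esub> f \<noteq> f \<otimes>\<^bsub>G\<^esub> y} mod 2
      = (\<Sum>d\<in>u. \<Sum>e\<in>v. \<Sum>f\<in>w. F2 d e f) mod 2"
  proof -
    have "card {(y, f). y \<in> alg_mult G u v \<and> f \<in> w \<and> y \<otimes>\<^bsub>G\<^esub> f \<noteq> f \<otimes>\<^bsub>G\<^esub> y} mod 2
        = (\<Sum>f\<in>w. \<Sum>t\<in>u\<times>v. card {y\<in>bp t. y \<otimes>\<^bsub>G\<^esub> f \<noteq> f \<otimes>\<^bsub>G\<^esub> y}) mod 2"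
      unfolding mult by (rule reduce_right[OF finite_cartesian_product[OF u(1) v(1)] bpfin w(1)])
    also have "(\<Sum>f\<in>w. \<Sum>t\<in>u\<times>v. card {y\<in>bp t. y \<otimes>\<^bsub>G\<^esub> f \<noteq> f \<otimes>\<^bsub>G\<^esub> y}) = (\<Sum>f\<in>w. \<Sum>d\<in>u. \<Sum>e\<in>v. F2 d e f)"
      by (rule sum.cong[OF refl]) (unfold sum.cartesian_product F2_def, rule sum.cong, auto simp: bp_def)
    also have "\<dots> = (\<Sum>d\<in>u. \<Sum>f\<in>w. \<Sum>e\<in>v. F2 d e f)" by (rule sum.swap)
    also have "\<dots> = (\<Sum>d\<in>u. \<Sum>e\<in>v. \<Sum>f\<in>w. F2 d e f)" by (rule sum.cong[OF refl], rule sum.swap)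
    finally show ?thesis .
  qed
  have eq: "(\<Sum>d\<in>u. \<Sum>e\<in>v. \<Sum>f\<in>w. F1 d e f) mod 2 = (\<Sum>d\<in>u. \<Sum>e\<in>v. \<Sum>f\<in>w. F2 d e f) mod 2"
    apply (rule sum_mod2_cong)+
    apply (rule loc)
    using u(2) v(2) w(2) by auto
  have "card {(d, x). d \<in> u \<and> x \<in> alg_mult G v w \<and> d \<otimes>\<^bsub>G\<^esub> x \<noteq> x \<otimes>\<^bsub>G\<^esub> d} mod 2
      = card {(y, f). y \<in> alg_mult G u v \<and> f \<in> w \<and> y \<otimes>\<^bsub>G\<^esub> f \<noteq> f \<otimes>\<^bsub>G\<^esub> y} mod 2"
    unfolding LHS RHS eq ..
  thus ?thesis unfolding alg_form_def by (simp only: even_iff_mod_2_eq_zero)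
qed

end
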